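(* Let $(\mathbb{K},\partial)$ be a differential field with field of constants $C$ (algebraically closed, characteristic zero), let $L\in\mathbb{K}[\partial]$ be of order $n$ in normal form, and let $\mathcal{G}=\{G_0=1,G_1,\ldots,G_{t-1}\}$ be a Goodearl basis of $\mathcal{C}(L)$ as a $C[L]$-module. Assign weights $w(\lambda)=n$, $w(\mu_i)=\mathrm{ord}(G_i)$, and to a monomial $\lambda^k\mu_1^{\alpha_1}\cdots\mu_{t-1}^{\alpha_{t-1}}$ the weight $kn+\sum_i\alpha_i\mathrm{ord}(G_i)$. Then for every positive integer $W$ there is at most one monomial in $\lambda,\mu_1,\ldots,\mu_{t-1}$ that is linear in $\mu_1,\ldots,\mu_{t-1}$ (i.e. of the form $\lambda^k$ or $\lambda^k\mu_i$) and has weight $W$.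
   Context: $\mathcal{C}(L)=\{A\in\mathbb{K}[\partial]:LA=AL\}$. A Goodearl basis is a $C[L]$-module basis $\{G_0=1,\ldots,G_{t-1}\}$ of $\mathcal{C}(L)$ in which each $G_k$ has minimal order among $Q\in\mathcal{C}(L)$ with $\mathrm{ord}(Q)\equiv\mathrm{ord}(G_k)\pmod n$, and the classes $\mathrm{ord}(G_k)\bmod n$ are pairwise distinct and exhaust the classes mod $n$ of orders of elements of $\mathcal{C}(L)$. The weight of a monomial $M$ equals $\mathrm{ord}(\phi_L(M))$ where $\phi_L(\lambda)=L$, $\phi_L(\mu_i)=G_i$. *)

theory Defs
  imports "HOL-Computational_Algebra.Polynomial"
begin

definition derivation :: "('a::field \<Rightarrow> 'a) \<Rightarrow> bool" where
  "derivation D \<longleftrightarrow> (\<forall>x y. D (x + y) = D x + D y) \<and> (\<forall>x y. D (x * y) = x * D y + D x * y)"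

definition constants :: "('a::field \<Rightarrow> 'a) \<Rightarrow> 'a set" where
  "constants D = {c. D c = 0}"

definition alg_closed_constants :: "('a::field \<Rightarrow> 'a) \<Rightarrow> bool" where
  "alg_closed_constants D \<longleftrightarrow>
     (\<forall>p::'a poly. (\<forall>i. coeff p i \<in> constants D) \<and> degree p \<ge> 1 \<longrightarrow>
        (\<exists>c \<in> constants D. poly p c = 0))"

text \<open>Differential operators in K[\<partial>] are represented by their coefficient polynomial:
  the operator sum a_i \<partial>^i is the polynomial with coeff i = a_i.
  Addition is polynomial addition; multiplication obeys \<partial> a = a \<partial> + D a.\<close>

definition dleft :: "('a::field \<Rightarrow> 'a) \<Rightarrow> 'a poly \<Rightarrow> 'a poly" where
  "dleft D Q = pCons 0 Q + Abs_poly (\<lambda>j. D (coeff Q j))"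

definition opmul :: "('a::field \<Rightarrow> 'a) \<Rightarrow> 'a poly \<Rightarrow> 'a poly \<Rightarrow> 'a poly" where
  "opmul D P Q = (\<Sum>i\<le>degree P. smult (coeff P i) ((dleft D ^^ i) Q))"

abbreviation ord :: "'a::zero poly \<Rightarrow> nat" where
  "ord P \<equiv> degree P"

definition normal_form :: "'a::field poly \<Rightarrow> bool" where
  "normal_form L \<longleftrightarrow> degree L \<ge> 1 \<and> lead_coeff L = 1 \<and> coeff L (degree L - 1) = 0"

definition centralizer :: "('a::field \<Rightarrow> 'a) \<Rightarrow> 'a poly \<Rightarrow> 'a poly set" where
  "centralizer D L = {A. opmul D L A = opmul D A L}"

definition oppow :: "('a::field \<Rightarrow> 'a) \<Rightarrow> 'a poly \<Rightarrow> nat \<Rightarrow> 'a poly" where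
  "oppow D L k = (opmul D L ^^ k) 1"

definition eval_at_op :: "('a::field \<Rightarrow> 'a) \<Rightarrow> 'a poly \<Rightarrow> 'a poly \<Rightarrow> 'a poly" where
  "eval_at_op D p L = (\<Sum>k\<le>degree p. smult (coeff p k) (oppow D L k))"

definition module_basis :: "('a::field \<Rightarrow> 'a) \<Rightarrow> 'a poly \<Rightarrow> (nat \<Rightarrow> 'a poly) \<Rightarrow> nat \<Rightarrow> bool" where
  "module_basis D L G t \<longleftrightarrow>
     (\<forall>i<t. G i \<in> centralizer D L) \<and>
     (\<forall>A \<in> centralizer D L. \<exists>!ps :: nat \<Rightarrow> 'a poly.
        (\<forall>i. \<forall>j. coeff (ps i) j \<in> constants D) \<and> (\<forall>i\<ge>t. ps i = 0) \<and>
        A = (\<Sum>i<t. opmul D (eval_at_op D (ps i) L) (G i)))"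

definition goodearl_basis :: "('a::field \<Rightarrow> 'a) \<Rightarrow> 'a poly \<Rightarrow> (nat \<Rightarrow> 'a poly) \<Rightarrow> nat \<Rightarrow> bool" where
  "goodearl_basis D L G t \<longleftrightarrow>
     t \<ge> 1 \<and> G 0 = 1 \<and> module_basis D L G t \<and>
     (\<forall>k<t. \<forall>Q \<in> centralizer D L. Q \<noteq> 0 \<and> ord Q mod ord L = ord (G k) mod ord L
              \<longrightarrow> ord (G k) \<le> ord Q) \<and>
     (\<forall>i<t. \<forall>j<t. i \<noteq> j \<longrightarrow> ord (G i) mod ord L \<noteq> ord (G j) mod ord L) \<and>
     {ord Q mod ord L | Q. Q \<in> centralizer D L \<and> Q \<noteq> 0} = {ord (G i) mod ord L | i. i < t}"

text \<open>Monomials linear in mu_1..mu_(t-1): (k, None) is lambda^k, (k, Some i) is lambda^k mu_i.\<close>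
definition linear_monomials :: "nat \<Rightarrow> (nat \<times> nat option) set" where
  "linear_monomials t = {(k, None) | k. True} \<union> {(k, Some i) | k i. 1 \<le> i \<and> i < t}"

definition weight :: "nat \<Rightarrow> (nat \<Rightarrow> 'a::zero poly) \<Rightarrow> nat \<times> nat option \<Rightarrow> nat" where
  "weight n G m = fst m * n + (case snd m of None \<Rightarrow> 0 | Some i \<Rightarrow> ord (G i))"

end

theory Submission
  imports Defs
begin

theorem lemma6p2:
  fixes D :: "'a::field_char_0 \<Rightarrow> 'a" and L :: "'a poly" and G :: "nat \<Rightarrow> 'a poly"
    and t :: nat
  assumes "derivation D"
    and "alg_closed_constants D"
    and "normal_form L"
    and "goodearl_basis D L G t"
  shows "\<forall>W::nat. W > 0 \<longrightarrow>
           (\<forall>m1 \<in> linear_monomials t. \<forall>m2 \<in> linear_monomials t.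
              weight (ord L) G m1 = W \<longrightarrow> weight (ord L) G m2 = W \<longrightarrow> m1 = m2)"
proof (intro allI impI ballI)
  fix W m1 m2
  assume m1: "m1 \<in> linear_monomials t" and m2: "m2 \<in> linear_monomials t"
    and w1: "weight (ord L) G m1 = W" and w2: "weight (ord L) G m2 = W"
  define n where "n = ord L"
  have n: "n \<ge> 1" using assms(3) unfolding normal_form_def n_def by simp
  have G0: "G 0 = 1" and t1: "t \<ge> 1"
    and dist: "\<forall>i<t. \<forall>j<t. i \<noteq> j \<longrightarrow> ord (G i) mod n \<noteq> ord (G j) mod n"
    using assms(4) unfolding goodearl_basis_def n_def by auto
  define idx where "idx = (\<lambda>m::nat \<times> nat option. case snd m of None \<Rightarrow> 0 | Some i \<Rightarrow> i)"
  have wt: "weight n G m = fst m * n + ord (G (idx m))" for m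
    unfolding weight_def idx_def using G0 by (cases "snd m") auto
  have idxlt: "idx m < t" if "m \<in> linear_monomials t" for m
    using that t1 unfolding linear_monomials_def idx_def by auto
  have eqW: "fst m1 * n + ord (G (idx m1)) = fst m2 * n + ord (G (idx m2))"
    using w1 w2 wt n_def by metis
  hence "ord (G (idx m1)) mod n = ord (G (idx m2)) mod n"
    by (metis mod_mult_self3)
  hence ii: "idx m1 = idx m2" using dist idxlt m1 m2 by blast
  with eqW have "fst m1 * n = fst m2 * n" by simp
  hence kk: "fst m1 = fst m2" using n by simp
  have "snd m1 = snd m2"
    using m1 m2 ii unfolding linear_monomials_def idx_def by auto
  with kk show "m1 = m2" by (simp add: prod_eq_iff)
qed

end
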